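(* Let $p_1=3, p_2=5, p_3=7, p_4=11, p_5=13,\dots$ be the odd prime numbers in increasing order. Then for all $m,k\in\mathbb{N}$, $$\prod_{n=1}^m\left(\frac{p_n^{2k}}{p_n^{2k}-1}\right) > \sum_{n=0}^m \frac{1}{(2n+1)^{2k}}.$$
   Context: $\mathbb{N}=\{1,2,3,\dots\}$. *)

theory Defs
  imports Complex_Main "HOL-Computational_Algebra.Primes" "HOL-Library.Infinite_Set"
begin

text \<open>The n-th odd prime, 1-indexed: odd_prime 1 = 3, odd_prime 2 = 5, ...
  (enumerate is 0-indexed and lists an infinite set of naturals in increasing order).\<close>
definition odd_prime :: "nat \<Rightarrow> nat" where
  "odd_prime n = enumerate {p. prime p \<and> odd p} (n - 1)"

end

theory Submission
  imports Defs "HOL-Library.FuncSet"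
begin

definition OPS :: "nat set" where "OPS = {p. prime p \<and> odd p}"

lemma inf_OPS: "infinite OPS"
proof
  assume fin: "finite OPS"
  have sub: "{p::nat. prime p} \<subseteq> insert 2 OPS"
  proof
    fix p :: nat assume "p \<in> {p. prime p}"
    hence p: "prime p" by simp
    show "p \<in> insert 2 OPS"
    proof (cases "p = 2")
      case False
      hence "p > 2" using prime_ge_2_nat[OF p] by simp
      hence "odd p" using prime_odd_nat[OF p] by simp
      thus ?thesis using p unfolding OPS_def by simp
    qed simp
  qed
  have "finite (insert 2 OPS)" using fin by simp
  hence "finite {p::nat. prime p}" by (rule finite_subset[OF sub])
  thus False using primes_infinite by contradiction
qed

lemma enum_ge: "enumerate OPS i \<ge> 2*i+3"
proof (induction i)
  case 0
  have "enumerate OPS 0 \<in> OPS" using enumerate_in_set inf_OPS by blast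
  hence "prime (enumerate OPS 0)" "odd (enumerate OPS 0)" unfolding OPS_def by auto
  moreover have "enumerate OPS 0 \<ge> 2" using prime_ge_2_nat \<open>prime (enumerate OPS 0)\<close> by blast
  moreover have "enumerate OPS 0 \<noteq> 2" using \<open>odd (enumerate OPS 0)\<close> by auto
  ultimately show ?case by simp
next
  case (Suc i)
  have a: "enumerate OPS (Suc i) \<in> OPS" "enumerate OPS i \<in> OPS" using enumerate_in_set inf_OPS by blast+
  have b: "enumerate OPS i < enumerate OPS (Suc i)" using enumerate_step inf_OPS by blast
  from a have "odd (enumerate OPS (Suc i))" "odd (enumerate OPS i)" unfolding OPS_def by auto
  with b have "enumerate OPS (Suc i) \<ge> enumerate OPS i + 2"
    by (auto elim!: oddE)
  then show ?case using Suc by simp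
qed

lemma odd_prime_ge: "n \<ge> 1 \<Longrightarrow> odd_prime n \<ge> 2*n+1"
  unfolding odd_prime_def OPS_def[symmetric] using enum_ge[of "n-1"] by simp

lemma odd_prime_in: "prime (odd_prime n) \<and> odd (odd_prime n)"
  unfolding odd_prime_def OPS_def[symmetric] using enumerate_in_set[OF inf_OPS] unfolding OPS_def by blast

lemma odd_prime_inj: "inj_on odd_prime {1..m}"
proof
  fix a b assume ab: "a \<in> {1..m}" "b \<in> {1..m}" "odd_prime a = odd_prime b"
  hence "enumerate OPS (a-1) = enumerate OPS (b-1)" unfolding odd_prime_def OPS_def by simp
  hence "a - 1 = b - 1" using inf_OPS by (metis enumerate_mono_le_iff le_antisym order_refl)
  thus "a = b" using ab by auto
qed

lemma odd_prime_surj: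
  assumes "prime q" "odd q" "q \<le> odd_prime m" "m \<ge> 1"
  shows "q \<in> odd_prime ` {1..m}"
proof -
  have "q \<in> OPS" using assms unfolding OPS_def by auto
  then obtain j where j: "enumerate OPS j = q" using enumerate_Ex inf_OPS by blast
  have "j \<le> m - 1" using assms(3) j[symmetric] inf_OPS unfolding odd_prime_def OPS_def[symmetric] by simp
  hence "q = odd_prime (j+1)" "j+1 \<in> {1..m}" using j assms(4) unfolding odd_prime_def OPS_def[symmetric] by auto
  thus ?thesis by blast
qed

lemma aux_eq: "(a::real) > 1 \<Longrightarrow> 1 / (1 - 1 / a) = a / (a - 1)"
  by (simp add: field_simps)

theorem proposition2p3:
  fixes m k :: nat
  assumes "m \<ge> 1" and "k \<ge> 1"
  shows "(\<Prod>n=1..m. real (odd_prime n) ^ (2*k) / (real (odd_prime n) ^ (2*k) - 1))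
           > (\<Sum>n=0..m. 1 / real (2*n+1) ^ (2*k))"
proof -
  define P where "P = odd_prime ` {1..m}"
  define M where "M = 2*m+2"
  define x where "x p = 1 / real p ^ (2*k)" for p :: nat
  define Od where "Od = {n::nat. odd n \<and> n \<le> 2*m+1}"
  have finP: "finite P" unfolding P_def by simp
  have Pprime: "prime p \<and> odd p" if "p \<in> P" for p using that odd_prime_in unfolding P_def by auto
  have xpos: "0 < x p" "x p < 1" if "p \<in> P" for p
  proof -
    have "p \<ge> 2" using Pprime[OF that] prime_ge_2_nat by blast
    hence "real p ^ (2*k) > 1" using assms(2) by (simp add: one_less_power)
    thus "0 < x p" "x p < 1" unfolding x_def using \<open>p \<ge> 2\<close> by (auto simp: field_simps)
  qed
  have L: "(\<Prod>n=1..m. real (odd_prime n) ^ (2*k) / (real (odd_prime n) ^ (2*k) - 1))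
      = (\<Prod>p\<in>P. 1 / (1 - x p))"
  proof -
    have "(\<Prod>p\<in>P. 1 / (1 - x p)) = (\<Prod>n=1..m. 1 / (1 - x (odd_prime n)))"
      unfolding P_def by (rule prod.reindex[OF odd_prime_inj, unfolded comp_def])
    also have "\<dots> = (\<Prod>n=1..m. real (odd_prime n) ^ (2*k) / (real (odd_prime n) ^ (2*k) - 1))"
    proof (rule prod.cong[OF refl])
      fix n assume "n \<in> {1..m}"
      hence "odd_prime n \<in> P" unfolding P_def by blast
      hence "real (odd_prime n) ^ (2*k) > 1" using xpos unfolding x_def by auto
      thus "1 / (1 - x (odd_prime n)) = real (odd_prime n) ^ (2*k) / (real (odd_prime n) ^ (2*k) - 1)"
        unfolding x_def by (rule aux_eq)
    qed
    finally show ?thesis by simp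
  qed
  have step1: "(\<Prod>p\<in>P. \<Sum>j<M. x p ^ j) < (\<Prod>p\<in>P. 1 / (1 - x p))"
  proof (rule prod_mono_strict)
    show "odd_prime 1 \<in> P" unfolding P_def using assms(1) by auto
    show "(\<Sum>j<M. x (odd_prime 1) ^ j) < 1 / (1 - x (odd_prime 1))"
      using geometric_sum_less xpos \<open>odd_prime 1 \<in> P\<close> by blast
    show "finite P" by fact
    show "0 \<le> (\<Sum>j<M. x i ^ j) \<and> (\<Sum>j<M. x i ^ j) \<le> 1 / (1 - x i)" if "i \<in> P" for i
      using geometric_sum_less[of "x i" "{..<M}"] xpos[OF that] by (auto intro: sum_nonneg)
    show "0 < 1 / (1 - x i)" if "i \<in> P" for i using xpos[OF that] by auto
  qed
  have step2: "(\<Prod>p\<in>P. \<Sum>j<M. x p ^ j) = (\<Sum>g\<in>PiE P (\<lambda>_. {..<M}). \<Prod>p\<in>P. x p ^ g p)"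
    by (rule prod_sum_PiE) (auto simp: finP)
  define \<phi> where "\<phi> n = restrict (\<lambda>p. multiplicity p n) P" for n
  have keyO: "prime_factors n \<subseteq> P \<and> n = (\<Prod>p\<in>P. p ^ multiplicity p n) \<and> (\<forall>p\<in>P. multiplicity p n < M)"
    if "n \<in> Od" for n
  proof -
    have n: "odd n" "n \<le> 2*m+1" "n > 0" using that unfolding Od_def by (auto intro: odd_pos)
    have sub: "prime_factors n \<subseteq> P"
    proof
      fix q assume q: "q \<in> prime_factors n"
      hence "prime q" "q dvd n" by auto
      hence "odd q" "q \<le> n" using n by (auto intro: dvd_imp_le dest: dvd_trans)
      hence "q \<le> odd_prime m" using n odd_prime_ge[OF assms(1)] by linarith
      thus "q \<in> P" unfolding P_def using odd_prime_surj \<open>prime q\<close> \<open>odd q\<close> assms(1) by blast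
    qed
    have "n = (\<Prod>p\<in>prime_factors n. p ^ multiplicity p n)" using prime_factorization_nat n by blast
    also have "\<dots> = (\<Prod>p\<in>P. p ^ multiplicity p n)"
    proof (rule prod.mono_neutral_left[OF finP sub])
      show "\<forall>i\<in>P - prime_factors n. i ^ multiplicity i n = 1"
        using Pprime n by (auto simp: prime_factors_multiplicity not_dvd_imp_multiplicity_0)
    qed
    finally have eq: "n = (\<Prod>p\<in>P. p ^ multiplicity p n)" .
    have "multiplicity p n < M" if "p \<in> P" for p
    proof -
      have True: "prime p" using Pprime that by blast
      have "p ^ multiplicity p n \<le> n" using multiplicity_dvd n(3) dvd_imp_le by blast
      moreover have "multiplicity p n < 2 ^ multiplicity p n" by (rule less_exp)
      moreover have "2 ^ multiplicity p n \<le> p ^ multiplicity p n"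
        using prime_ge_2_nat[OF True] by (simp add: power_mono)
      ultimately show ?thesis using n unfolding M_def by linarith
    qed
    thus ?thesis using sub eq by blast
  qed
  have injphi: "inj_on \<phi> Od"
  proof
    fix a b assume ab: "a \<in> Od" "b \<in> Od" "\<phi> a = \<phi> b"
    have eqAB: "(\<Prod>p\<in>P. p ^ multiplicity p a) = (\<Prod>p\<in>P. p ^ multiplicity p b)"
    proof (rule prod.cong[OF refl])
      fix p assume "p \<in> P"
      then show "p ^ multiplicity p a = p ^ multiplicity p b"
        using fun_cong[OF ab(3), of p] unfolding \<phi>_def by simp
    qed
    have eqa: "a = (\<Prod>p\<in>P. p ^ multiplicity p a)" using keyO ab(1) by blast
    have eqb: "b = (\<Prod>p\<in>P. p ^ multiplicity p b)" using keyO ab(2) by blast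
    show "a = b" by (rule trans[OF eqa trans[OF eqAB eqb[symmetric]]])
  qed
  have imgphi: "\<phi> ` Od \<subseteq> PiE P (\<lambda>_. {..<M})"
  proof
    fix g assume "g \<in> \<phi> ` Od"
    then obtain n where n: "n \<in> Od" "g = \<phi> n" by blast
    have "\<forall>p\<in>P. multiplicity p n < M" using keyO[OF n(1)] by blast
    thus "g \<in> PiE P (\<lambda>_. {..<M})" unfolding n(2) \<phi>_def by (simp add: restrict_PiE_iff)
  qed
  have termeq: "(\<Prod>p\<in>P. x p ^ \<phi> n p) = 1 / real n ^ (2*k)" if "n \<in> Od" for n
  proof -
    have "(\<Prod>p\<in>P. x p ^ \<phi> n p) = (\<Prod>p\<in>P. 1 / (real p ^ multiplicity p n) ^ (2*k))"
      unfolding \<phi>_def x_def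
      by (rule prod.cong[OF refl]) (simp add: power_one_over power_mult[symmetric] mult.commute)
    also have "\<dots> = 1 / (\<Prod>p\<in>P. real p ^ multiplicity p n) ^ (2*k)"
      by (simp add: prod_dividef prod_power_distrib)
    also have "(\<Prod>p\<in>P. real p ^ multiplicity p n) = real n"
    proof -
      have eq: "n = (\<Prod>p\<in>P. p ^ multiplicity p n)" using keyO[OF that] by blast
      have "(\<Prod>p\<in>P. real p ^ multiplicity p n) = real (\<Prod>p\<in>P. p ^ multiplicity p n)" by simp
      also have "\<dots> = real n" by (simp only: eq[symmetric])
      finally show ?thesis .
    qed
    finally show ?thesis .
  qed
  have R: "(\<Sum>n=0..m. 1 / real (2*n+1) ^ (2*k)) = (\<Sum>n\<in>Od. 1 / real n ^ (2*k))"
  proof -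
    have "Od = (\<lambda>n. 2*n+1) ` {0..m}"
    proof
      show "Od \<subseteq> (\<lambda>n. 2*n+1) ` {0..m}"
      proof
        fix n assume "n \<in> Od"
        hence "odd n" "n \<le> 2*m+1" unfolding Od_def by auto
        then obtain j where "n = 2*j+1" by (metis oddE)
        thus "n \<in> (\<lambda>n. 2*n+1) ` {0..m}" using \<open>n \<le> 2*m+1\<close> by auto
      qed
    qed (auto simp: Od_def)
    moreover have "inj_on (\<lambda>n::nat. 2*n+1) {0..m}" by (auto simp: inj_on_def)
    ultimately show ?thesis
      using sum.reindex[of "\<lambda>n::nat. 2*n+1" "{0..m}" "\<lambda>n. 1 / real n ^ (2*k)"] by (simp add: comp_def)
  qed
  have step3: "(\<Sum>n\<in>Od. 1 / real n ^ (2*k)) \<le> (\<Sum>g\<in>PiE P (\<lambda>_. {..<M}). \<Prod>p\<in>P. x p ^ g p)"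
  proof -
    have "(\<Sum>n\<in>Od. 1 / real n ^ (2*k)) = (\<Sum>n\<in>Od. \<Prod>p\<in>P. x p ^ \<phi> n p)"
      using termeq by simp
    also have "\<dots> = (\<Sum>g\<in>\<phi> ` Od. \<Prod>p\<in>P. x p ^ g p)"
      by (rule sym, rule sum.reindex_cong[OF injphi refl refl])
    also have "\<dots> \<le> (\<Sum>g\<in>PiE P (\<lambda>_. {..<M}). \<Prod>p\<in>P. x p ^ g p)"
    proof (rule sum_mono2[OF _ imgphi])
      show "finite (PiE P (\<lambda>_. {..<M}))" using finP by (simp add: finite_PiE)
      have "0 \<le> x p" for p unfolding x_def by simp
      thus "\<And>g. g \<in> PiE P (\<lambda>_. {..<M}) - \<phi> ` Od \<Longrightarrow> 0 \<le> (\<Prod>p\<in>P. x p ^ g p)"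
        by (intro prod_nonneg) simp
    qed
    finally show ?thesis .
  qed
  have "(\<Sum>n=0..m. 1 / real (2*n+1) ^ (2*k)) \<le> (\<Prod>p\<in>P. \<Sum>j<M. x p ^ j)"
    unfolding R step2 by (rule step3)
  also note step1
  also note L[symmetric]
  finally show ?thesis .
qed

end
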